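(* Let $L\in\mathbb{N}$ and let the scalar sequences $\{\overline{\sigma}^{(l)}_*(k)\}_{k\ge 0}$ ($*\in\{f,i,o\}$), $\{\overline{\phi}^{(l)}_c(k)\}_{k\ge 0}$ and $\{\eta^{(l)}(k)\}_{k\ge -1}$ be defined as in the context. Then for every layer $l\in[L]$ each of these sequences is monotonically non-increasing in $k$ and convergent.
   Context: Fix $L\in\mathbb{N}$, dimensions $n_x,n_c$, and $x_{\max}>0$. For each layer $l\in[L]$ let $n^{(l)}=n_x$ if $l=1$ and $n^{(l)}=n_c$ if $l\ge 2$, and let $x^{(l)}_{\max}=x_{\max}$ if $l=1$ and $x^{(l)}_{\max}=1$ if $l\ge 2$. Let $W^{(l)}_*\in\mathbb{R}^{n_c\times n^{(l)}}$, $U^{(l)}_*\in\mathbb{R}^{n_c\times n_c}$, $b^{(l)}_*\in\mathbb{R}^{n_c}$ for $*\in\{f,i,c,o\}$. Let $\sigma(w)=1/(1+e^{-w})$ and $\phi(w)=\tanh w$. For a matrix $A$, $|A|$ is the entrywise absolute value; $\mathbf{1}_n$ is the all-ones vector in $\mathbb{R}^n$; for a vector $v$, $v_+$ is the componentwise positive part $(\max\{v_{(j)},0\})_j$; $\|v\|_\infty=\max_j|v_{(j)}|$. Define, for $\eta\ge 0$ and $*\in\{f,i,o\}$, $G^{(l)}_*(\eta)=\big\|\big(x^{(l)}_{\max}|W^{(l)}_*|\mathbf{1}_{n^{(l)}}+\eta|U^{(l)}_*|\mathbf{1}_{n_c}+b^{(l)}_*\big)_+\big\|_\infty$, and $G^{(l)}_c(\eta)=\big\|x^{(l)}_{\max}|W^{(l)}_c|\mathbf{1}_{n^{(l)}}+\eta|U^{(l)}_c|\mathbf{1}_{n_c}+|b^{(l)}_c|\big\|_\infty$.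 Define recursively, with $\eta^{(l)}(-1)=1$ and for $k\ge 0$: $\overline{\sigma}^{(l)}_*(k)=\sigma(G^{(l)}_*(\eta^{(l)}(k-1)))$ for $*\in\{f,i,o\}$; $\overline{\phi}^{(l)}_c(k)=\phi(G^{(l)}_c(\eta^{(l)}(k-1)))$; $\overline{c}^{(l)}(k)=\dfrac{\overline{\sigma}^{(l)}_i(k)\,\overline{\phi}^{(l)}_c(k)}{1-\overline{\sigma}^{(l)}_f(k)}$; $\eta^{(l)}(k)=\phi(\overline{c}^{(l)}(k))\,\overline{\sigma}^{(l)}_o(k)$. *)

theory Defs
  imports "HOL-Analysis.Analysis"
begin

datatype gate = Gf | Gi | Gc | Go

definition sigmoid :: "real \<Rightarrow> real" where
  "sigmoid w = 1 / (1 + exp (- w))"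

definition n_layer :: "nat \<Rightarrow> nat \<Rightarrow> nat \<Rightarrow> nat" where
  "n_layer nx nc l = (if l = 1 then nx else nc)"

definition xmax_layer :: "real \<Rightarrow> nat \<Rightarrow> real" where
  "xmax_layer xmax l = (if l = 1 then xmax else 1)"

definition norm_inf :: "nat \<Rightarrow> (nat \<Rightarrow> real) \<Rightarrow> real" where
  "norm_inf m v = Max {\<bar>v j\<bar> | j. j < m}"

text \<open>G^{(l)}_*(eta): W, U matrices (row j, column i), b bias vector of the given gate of layer l.\<close>
definition Gfun :: "nat \<Rightarrow> nat \<Rightarrow> real \<Rightarrow> (nat \<Rightarrow> nat \<Rightarrow> real) \<Rightarrow> (nat \<Rightarrow> nat \<Rightarrow> real)
                    \<Rightarrow> (nat \<Rightarrow> real) \<Rightarrow> gate \<Rightarrow> real \<Rightarrow> real" where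
  "Gfun n nc xm W U b g \<eta> =
     (if g = Gc then
        norm_inf nc (\<lambda>j. xm * (\<Sum>i<n. \<bar>W j i\<bar>) + \<eta> * (\<Sum>i<nc. \<bar>U j i\<bar>) + \<bar>b j\<bar>)
      else
        norm_inf nc (\<lambda>j. max (xm * (\<Sum>i<n. \<bar>W j i\<bar>) + \<eta> * (\<Sum>i<nc. \<bar>U j i\<bar>) + b j) 0))"

definition Glayer :: "nat \<Rightarrow> nat \<Rightarrow> real \<Rightarrow> (nat \<Rightarrow> gate \<Rightarrow> nat \<Rightarrow> nat \<Rightarrow> real)
    \<Rightarrow> (nat \<Rightarrow> gate \<Rightarrow> nat \<Rightarrow> nat \<Rightarrow> real) \<Rightarrow> (nat \<Rightarrow> gate \<Rightarrow> nat \<Rightarrow> real)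
    \<Rightarrow> nat \<Rightarrow> gate \<Rightarrow> real \<Rightarrow> real" where
  "Glayer nx nc xmax W U b l g \<eta> =
     Gfun (n_layer nx nc l) nc (xmax_layer xmax l) (W l g) (U l g) (b l g) g \<eta>"

text \<open>Shifted eta sequence: eta_seq ... l k = eta^{(l)}(k - 1), so eta_seq ... l 0 = eta^{(l)}(-1) = 1.\<close>
fun eta_seq :: "nat \<Rightarrow> nat \<Rightarrow> real \<Rightarrow> (nat \<Rightarrow> gate \<Rightarrow> nat \<Rightarrow> nat \<Rightarrow> real)
    \<Rightarrow> (nat \<Rightarrow> gate \<Rightarrow> nat \<Rightarrow> nat \<Rightarrow> real) \<Rightarrow> (nat \<Rightarrow> gate \<Rightarrow> nat \<Rightarrow> real)
    \<Rightarrow> nat \<Rightarrow> nat \<Rightarrow> real" where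
  "eta_seq nx nc xmax W U b l 0 = 1"
| "eta_seq nx nc xmax W U b l (Suc k) =
     (let e = eta_seq nx nc xmax W U b l k;
          G = Glayer nx nc xmax W U b l;
          cbar = sigmoid (G Gi e) * tanh (G Gc e) / (1 - sigmoid (G Gf e))
      in tanh cbar * sigmoid (G Go e))"

definition sigbar where
  "sigbar nx nc xmax W U b l g k =
     sigmoid (Glayer nx nc xmax W U b l g (eta_seq nx nc xmax W U b l k))"

definition phibar where
  "phibar nx nc xmax W U b l k =
     tanh (Glayer nx nc xmax W U b l Gc (eta_seq nx nc xmax W U b l k))"

end

theory Submission
  imports Defs
begin

lemma dec_conv: "decseq (X::nat \<Rightarrow> real) \<Longrightarrow> (\<And>i. B \<le> X i) \<Longrightarrow> convergent X"
proof -
  assume "decseq X" "\<And>i. B \<le> X i"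
  then obtain L where "X \<longlonglongrightarrow> L" using decseq_convergent[of X B] by blast
  then show ?thesis by (rule convergentI)
qed

lemma sigmoid_pos: "sigmoid x > 0"
  unfolding sigmoid_def by (simp add: add_pos_pos)

lemma sigmoid_lt1: "sigmoid x < 1"
proof -
  have "1 < 1 + exp (- x)" by simp
  moreover have "0 < 1 + exp (- x)" by (simp add: add_pos_pos)
  ultimately show ?thesis unfolding sigmoid_def by (simp add: divide_less_eq)
qed

lemma sigmoid_mono: "x \<le> y \<Longrightarrow> sigmoid x \<le> sigmoid y"
  unfolding sigmoid_def by (intro divide_left_mono) (auto simp: add_pos_pos)

lemma norm_inf_eq: "norm_inf m v = Max ((\<lambda>j. \<bar>v j\<bar>) ` {..<m})"
  unfolding norm_inf_def by (rule arg_cong[where f=Max]) auto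

lemma norm_inf_nonneg: "m \<ge> 1 \<Longrightarrow> norm_inf m v \<ge> 0"
  unfolding norm_inf_eq
  by (meson Max_ge abs_ge_zero finite_imageI finite_lessThan image_eqI lessThan_iff
        less_le_trans zero_less_one order_trans)

lemma norm_inf_mono:
  assumes "m \<ge> 1" "\<And>j. j < m \<Longrightarrow> \<bar>v j\<bar> \<le> \<bar>w j\<bar>"
  shows "norm_inf m v \<le> norm_inf m w"
  unfolding norm_inf_eq
proof (subst Max_le_iff)
  show "finite ((\<lambda>j. \<bar>v j\<bar>) ` {..<m})" by simp
  show "(\<lambda>j. \<bar>v j\<bar>) ` {..<m} \<noteq> {}" using assms(1) by (auto simp: lessThan_empty_iff)
  show "\<forall>a\<in>(\<lambda>j. \<bar>v j\<bar>) ` {..<m}. a \<le> Max ((\<lambda>j. \<bar>w j\<bar>) ` {..<m})"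
  proof
    fix a assume "a \<in> (\<lambda>j. \<bar>v j\<bar>) ` {..<m}"
    then obtain j where j: "j < m" "a = \<bar>v j\<bar>" by auto
    have "\<bar>w j\<bar> \<le> Max ((\<lambda>j. \<bar>w j\<bar>) ` {..<m})" using j by (intro Max_ge) auto
    then show "a \<le> Max ((\<lambda>j. \<bar>w j\<bar>) ` {..<m})" using assms(2)[OF j(1)] j by linarith
  qed
qed

lemma Gfun_mono:
  assumes "nc \<ge> 1" "xm \<ge> 0" "0 \<le> e" "e \<le> e'"
  shows "Gfun n nc xm W U b g e \<le> Gfun n nc xm W U b g e'"
proof -
  have S: "0 \<le> (\<Sum>i<nc. \<bar>U j i\<bar>)" for j by (simp add: sum_nonneg)
  have T: "0 \<le> (\<Sum>i<n. \<bar>W j i\<bar>)" for j by (simp add: sum_nonneg)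
  have M: "e * (\<Sum>i<nc. \<bar>U j i\<bar>) \<le> e' * (\<Sum>i<nc. \<bar>U j i\<bar>)" for j
    using S assms by (intro mult_right_mono) auto
  have P: "0 \<le> xm * (\<Sum>i<n. \<bar>W j i\<bar>) + e * (\<Sum>i<nc. \<bar>U j i\<bar>)" for j
    using S T assms by simp
  show ?thesis
  proof (cases "g = Gc")
    case True
    then show ?thesis unfolding Gfun_def apply simp apply (rule norm_inf_mono[OF assms(1)])
      using M P by (smt (verit))
  next
    case False
    then show ?thesis unfolding Gfun_def apply simp apply (rule norm_inf_mono[OF assms(1)])
      using M by (smt (verit))
  qed
qed

lemma Glayer_mono:
  assumes "nc \<ge> 1" "xmax > 0" "0 \<le> e" "e \<le> e'"
  shows "Glayer nx nc xmax W U b l g e \<le> Glayer nx nc xmax W U b l g e'"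
  unfolding Glayer_def using assms
  by (intro Gfun_mono) (auto simp: xmax_layer_def)

lemma Glayer_nonneg:
  assumes "nc \<ge> 1"
  shows "Glayer nx nc xmax W U b l g e \<ge> 0"
  unfolding Glayer_def Gfun_def using norm_inf_nonneg[OF assms] by auto

definition Fm where
  "Fm nx nc xmax W U b l e =
     (let G = Glayer nx nc xmax W U b l;
          cbar = sigmoid (G Gi e) * tanh (G Gc e) / (1 - sigmoid (G Gf e))
      in tanh cbar * sigmoid (G Go e))"

lemma eta_Suc: "eta_seq nx nc xmax W U b l (Suc k) = Fm nx nc xmax W U b l (eta_seq nx nc xmax W U b l k)"
  by (simp add: Fm_def Let_def)

lemma Fm_bounds:
  assumes "nc \<ge> 1"
  shows "0 \<le> Fm nx nc xmax W U b l e \<and> Fm nx nc xmax W U b l e \<le> 1"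
proof -
  let ?G = "Glayer nx nc xmax W U b l"
  define cb where "cb = sigmoid (?G Gi e) * tanh (?G Gc e) / (1 - sigmoid (?G Gf e))"
  have "0 \<le> cb" unfolding cb_def using Glayer_nonneg[OF assms] sigmoid_pos sigmoid_lt1
    by (intro divide_nonneg_pos mult_nonneg_nonneg) (auto simp: less_imp_le)
  hence t: "0 \<le> tanh cb" "tanh cb \<le> 1" using tanh_real_lt_1[of cb] by auto
  have s: "0 \<le> sigmoid (?G Go e)" "sigmoid (?G Go e) \<le> 1"
    using sigmoid_pos sigmoid_lt1 less_imp_le by blast+
  have "Fm nx nc xmax W U b l e = tanh cb * sigmoid (?G Go e)"
    by (simp add: Fm_def cb_def Let_def)
  moreover have "tanh cb * sigmoid (?G Go e) \<le> 1" using t s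
    by (metis mult_le_one)
  ultimately show ?thesis using t s by simp
qed

lemma Fm_mono:
  assumes "nc \<ge> 1" "xmax > 0" "0 \<le> e" "e \<le> e'"
  shows "Fm nx nc xmax W U b l e \<le> Fm nx nc xmax W U b l e'"
proof -
  let ?G = "Glayer nx nc xmax W U b l"
  have m: "?G g e \<le> ?G g e'" for g using Glayer_mono[OF assms] .
  define cb where "cb = sigmoid (?G Gi e) * tanh (?G Gc e) / (1 - sigmoid (?G Gf e))"
  define cb' where "cb' = sigmoid (?G Gi e') * tanh (?G Gc e') / (1 - sigmoid (?G Gf e'))"
  have a: "0 \<le> sigmoid (?G Gi e) * tanh (?G Gc e)"
    using Glayer_nonneg[OF assms(1)] sigmoid_pos by (intro mult_nonneg_nonneg) (auto intro: less_imp_le)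
  have b: "sigmoid (?G Gi e) * tanh (?G Gc e) \<le> sigmoid (?G Gi e') * tanh (?G Gc e')"
    using Glayer_nonneg[OF assms(1)] sigmoid_pos m sigmoid_mono
    by (intro mult_mono) (auto intro: less_imp_le)
  have c: "0 < 1 - sigmoid (?G Gf e')" using sigmoid_lt1 by simp
  have d: "1 - sigmoid (?G Gf e') \<le> 1 - sigmoid (?G Gf e)" using m sigmoid_mono by simp
  have "cb \<le> cb'" unfolding cb_def cb'_def
    using a b c d by (intro frac_le) auto
  hence t: "tanh cb \<le> tanh cb'" by simp
  have "0 \<le> cb" unfolding cb_def using a sigmoid_lt1 by (intro divide_nonneg_pos) auto
  hence t0: "0 \<le> tanh cb" by simp
  have "tanh cb * sigmoid (?G Go e) \<le> tanh cb' * sigmoid (?G Go e')"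
    using t t0 m sigmoid_mono sigmoid_pos by (intro mult_mono) (auto intro: less_imp_le)
  then show ?thesis by (simp add: Fm_def cb_def cb'_def Let_def)
qed

theorem lemmaB1:
  fixes L nx nc :: nat and xmax :: real
    and W U :: "nat \<Rightarrow> gate \<Rightarrow> nat \<Rightarrow> nat \<Rightarrow> real"
    and b :: "nat \<Rightarrow> gate \<Rightarrow> nat \<Rightarrow> real"
  assumes "nx \<ge> 1" and "nc \<ge> 1" and "xmax > 0"
  shows "\<forall>l \<in> {1..L}.
           (\<forall>g \<in> {Gf, Gi, Go}.
               decseq (sigbar nx nc xmax W U b l g) \<and> convergent (sigbar nx nc xmax W U b l g))
         \<and> decseq (phibar nx nc xmax W U b l) \<and> convergent (phibar nx nc xmax W U b l)
         \<and> decseq (eta_seq nx nc xmax W U b l) \<and> convergent (eta_seq nx nc xmax W U b l)"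
proof (intro ballI)
  fix l
  let ?e = "eta_seq nx nc xmax W U b l"
  have nn: "0 \<le> ?e k" for k
    by (cases k) (use Fm_bounds[OF assms(2)] eta_Suc in auto)
  have le1: "?e k \<le> 1" for k
    by (cases k) (use Fm_bounds[OF assms(2)] eta_Suc in auto)
  have step: "?e (Suc k) \<le> ?e k" for k
  proof (induction k)
    case 0 then show ?case using le1[of 1] by simp
  next
    case (Suc k)
    have "Fm nx nc xmax W U b l (?e (Suc k)) \<le> Fm nx nc xmax W U b l (?e k)"
      by (rule Fm_mono[OF assms(2,3) nn Suc.IH])
    then show ?case by (simp only: eta_Suc)
  qed
  have de: "decseq ?e" using step by (simp add: decseq_SucI)
  have dG: "decseq (\<lambda>k. Glayer nx nc xmax W U b l g (?e k))" for g
    using de nn Glayer_mono[OF assms(2,3)] unfolding decseq_def by blast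
  have ds: "decseq (sigbar nx nc xmax W U b l g)" for g
    using dG[of g] sigmoid_mono unfolding decseq_def sigbar_def by blast
  have dp: "decseq (phibar nx nc xmax W U b l)"
    using dG[of Gc] unfolding decseq_def phibar_def by simp
  show "(\<forall>g \<in> {Gf, Gi, Go}.
               decseq (sigbar nx nc xmax W U b l g) \<and> convergent (sigbar nx nc xmax W U b l g))
         \<and> decseq (phibar nx nc xmax W U b l) \<and> convergent (phibar nx nc xmax W U b l)
         \<and> decseq ?e \<and> convergent ?e"
  proof (intro conjI ballI)
    fix g
    show "decseq (sigbar nx nc xmax W U b l g)" by (rule ds)
    show "convergent (sigbar nx nc xmax W U b l g)"
      by (rule dec_conv[OF ds, of 0]) (simp add: sigbar_def sigmoid_pos less_imp_le)
  next
    show "decseq (phibar nx nc xmax W U b l)" by (rule dp)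
    show "convergent (phibar nx nc xmax W U b l)"
      by (rule dec_conv[OF dp, of "-1"]) (simp add: phibar_def tanh_real_gt_neg1 less_imp_le)
    show "decseq ?e" by (rule de)
    show "convergent ?e" by (rule dec_conv[OF de, of 0]) (rule nn)
  qed
qed

end
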